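(* Let $(X,d)$ be a separable metric space admitting a weak convergence, and let $p\ge 1$. Suppose that $\{\mu_n\}_{n\in\mathbb{N}}$ and $\mu$ in $\mathcal{P}_{p-1}(X)$ satisfy $\mu_n\to\mu$ in $\tau_{\mathrm{w}}^{p-1}$, and suppose that non-negative real numbers $\{\varepsilon_n\}_{n\in\mathbb{N}}$ satisfy $\varepsilon_n\to 0$. Then, for any sequence $\{x_n\}_{n\in\mathbb{N}}$ in $X$ with $x_n\in M_p(\mu_n;\varepsilon_n)$ for all $n\in\mathbb{N}$, the sequence $\{x_n\}_{n\in\mathbb{N}}$ is relatively $d$-compact (every subsequence has a further subsequence converging in $d$) and any $d$-subsequential limit of it lies in $M_p(\mu)$.
   Context: A convergence $c$ on a set $X$ is a rule assigning at most one point of $X$ as the "limit" of each sequence in $X$, such that whenever a sequence has limit $x$, every subsequence also has limit $x$; we write $x_n\to x$ in $c$. A convergence $w$ on $X$ is a weak convergence for the metric space $(X,d)$ if: (W1) whenever $\{x_n\}$ and $y$ in $X$ satisfy $\sup_n d(x_n,y)<\infty$, there are a subsequence $\{n_k\}$ and $x\in X$ with $x_{n_k}\to x$ in $w$; (W2) whenever $x_n\to x$ in $w$, then $d(x,y)\le\liminf_n d(x_n,y)$ for all $y\in X$; (W3) whenever $x_n\to x$ in $w$ and $d(x_n,y)\to d(x,y)$ for some $y\in X$, then $d(x_n,x)\to 0$. $(X,d)$ admits a weak convergence if such a $w$ exists. For $r\ge 0$, $\mathcal{P}_r(X)$ is the set of Borel probability measures $\mu$ on $(X,d)$ with $\int_X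 d^r(x,y)\,d\mu(y)<\infty$ for some (equivalently all) $x\in X$. We write $\mu_n\to\mu$ in $\tau_{\mathrm{w}}^{r}$ if $\int f\,d\mu_n\to\int f\,d\mu$ for every bounded continuous $f:(X,d)\to\mathbb{R}$ and $\int_X d^r(x,y)\,d\mu_n(y)\to\int_X d^r(x,y)\,d\mu(y)$ for all $x\in X$. For $p\ge1$ and $\mu\in\mathcal{P}_{p-1}(X)$ define $W_p(\mu,x,x'):=\int_X (d^p(x,y)-d^p(x',y))\,d\mu(y)$ (well defined), and for $\varepsilon\ge0$ define $M_p(\mu;\varepsilon):=\{x\in X: W_p(\mu,x,x')\le\varepsilon \text{ for all } x'\in X\}$ and the Fréchet $p$-mean set $M_p(\mu):=M_p(\mu;0)$. *)

theory Defs
  imports "HOL-Probability.Probability"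
begin

text \<open>Real power with the convention t^0 = 1 (also for t = 0), as in d^r with r = p - 1 >= 0.\<close>
definition rpow :: "real \<Rightarrow> real \<Rightarrow> real" where
  "rpow t r = (if r = 0 then 1 else t powr r)"

definition is_convergence :: "((nat \<Rightarrow> 'a) \<Rightarrow> 'a \<Rightarrow> bool) \<Rightarrow> bool" where
  "is_convergence c \<longleftrightarrow>
     (\<forall>xs x y. c xs x \<and> c xs y \<longrightarrow> x = y) \<and>
     (\<forall>xs x s. c xs x \<and> strict_mono s \<longrightarrow> c (xs \<circ> s) x)"

definition is_weak_convergence :: "((nat \<Rightarrow> 'a::metric_space) \<Rightarrow> 'a \<Rightarrow> bool) \<Rightarrow> bool" where
  "is_weak_convergence w \<longleftrightarrow> is_convergence w \<and>
     (\<forall>(xs::nat \<Rightarrow> 'a) (y::'a). bdd_above (range (\<lambda>n. dist (xs n) y)) \<longrightarrow>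
        (\<exists>(s::nat \<Rightarrow> nat) (x::'a). strict_mono s \<and> w (xs \<circ> s) x)) \<and>
     (\<forall>(xs::nat \<Rightarrow> 'a) (x::'a). w xs x \<longrightarrow>
        (\<forall>y::'a. ereal (dist x y) \<le> liminf (\<lambda>n. ereal (dist (xs n) y)))) \<and>
     (\<forall>(xs::nat \<Rightarrow> 'a) (x::'a) (y::'a). w xs x \<and> (\<lambda>n. dist (xs n) y) \<longlonglongrightarrow> dist x y \<longrightarrow>
        (\<lambda>n. dist (xs n) x) \<longlonglongrightarrow> 0)"

definition admits_weak_convergence :: "'a::metric_space itself \<Rightarrow> bool" where
  "admits_weak_convergence _ \<longleftrightarrow> (\<exists>w::(nat \<Rightarrow> 'a) \<Rightarrow> 'a \<Rightarrow> bool. is_weak_convergence w)"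

definition Prob_r :: "real \<Rightarrow> 'a::metric_space measure set" where
  "Prob_r r = {M. prob_space M \<and> sets M = sets borel \<and>
                  (\<exists>x. integrable M (\<lambda>y. rpow (dist x y) r))}"

definition conv_wr :: "real \<Rightarrow> (nat \<Rightarrow> 'a::metric_space measure) \<Rightarrow> 'a measure \<Rightarrow> bool" where
  "conv_wr r Ms M \<longleftrightarrow>
     (\<forall>f::'a \<Rightarrow> real. continuous_on UNIV f \<and> bounded (range f) \<longrightarrow>
        (\<lambda>n. integral\<^sup>L (Ms n) f) \<longlonglongrightarrow> integral\<^sup>L M f) \<and>
     (\<forall>x. (\<lambda>n. integral\<^sup>L (Ms n) (\<lambda>y. rpow (dist x y) r)) \<longlonglongrightarrow>
            integral\<^sup>L M (\<lambda>y. rpow (dist x y) r))"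

definition Wp :: "'a::metric_space measure \<Rightarrow> real \<Rightarrow> 'a \<Rightarrow> 'a \<Rightarrow> real" where
  "Wp M p x x' = integral\<^sup>L M (\<lambda>y. dist x y powr p - dist x' y powr p)"

definition Mp_eps :: "'a::metric_space measure \<Rightarrow> real \<Rightarrow> real \<Rightarrow> 'a set" where
  "Mp_eps M p \<epsilon> = {x. \<forall>x'. Wp M p x x' \<le> \<epsilon>}"

definition Mp :: "'a::metric_space measure \<Rightarrow> real \<Rightarrow> 'a set" where
  "Mp M p = Mp_eps M p 0"

end

theory Submission
  imports Defs
begin


lemma rpow_nonneg: "0 \<le> t \<Longrightarrow> 0 \<le> rpow t r"
  by (simp add: rpow_def)

lemma rpow_mono: "0 \<le> s \<Longrightarrow> s \<le> t \<Longrightarrow> 0 \<le> r \<Longrightarrow> rpow s r \<le> rpow t r"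
  by (simp add: rpow_def powr_mono2)

lemma rpow_add_le:
  assumes "0 \<le> s" "0 \<le> t" "0 \<le> r"
  shows "rpow (s + t) r \<le> 2 powr r * (rpow s r + rpow t r)"
proof (cases "r = 0")
  case True then show ?thesis by (simp add: rpow_def)
next
  case False
  then have r: "r > 0" using assms by auto
  have "(s + t) powr r \<le> (2 * max s t) powr r"
    using assms by (intro powr_mono2) auto
  also have "\<dots> = 2 powr r * max s t powr r"
    using assms by (simp add: powr_mult)
  also have "max s t powr r \<le> s powr r + t powr r"
    by (cases "s \<le> t") (auto simp: max_def)
  then have "2 powr r * max s t powr r \<le> 2 powr r * (s powr r + t powr r)"
    by (intro mult_left_mono) auto
  finally show ?thesis using False by (simp add: rpow_def)
qed

lemma cont_rpow:
  fixes f :: "'a::topological_space \<Rightarrow> real"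
  assumes "continuous_on UNIV f" "\<And>y. 0 \<le> f y" "0 \<le> r"
  shows "continuous_on UNIV (\<lambda>y. rpow (f y) r)"
proof (cases "r = 0")
  case True then show ?thesis by (simp add: rpow_def)
next
  case False
  have "continuous_on UNIV (\<lambda>y. f y powr r)"
    using assms False by (intro continuous_on_powr') auto
  then show ?thesis using False by (simp add: rpow_def)
qed

lemma cont_powr:
  fixes f :: "'a::topological_space \<Rightarrow> real"
  assumes "continuous_on UNIV f" "\<And>y. 0 \<le> f y" "0 < r"
  shows "continuous_on UNIV (\<lambda>y. f y powr r)"
  using continuous_on_powr'[of UNIV f "\<lambda>_. r"] assms by auto

lemma convex_lb_pos:
  fixes a b p :: real
  assumes "0 < a" "0 < b" "1 \<le> p"
  shows "p * rpow b (p - 1) * (a - b) \<le> a powr p - b powr p"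
proof -
  have rb: "rpow b (p - 1) = b powr (p - 1)" using assms by (simp add: rpow_def)
  have D: "\<And>z. 0 < z \<Longrightarrow> ((\<lambda>z. z powr p) has_real_derivative p * z powr (p - 1)) (at z)"
    by (rule has_real_derivative_powr)
  consider "a = b" | "b < a" | "a < b" by linarith
  then show ?thesis
  proof cases
    case 1 then show ?thesis by simp
  next
    case 2
    obtain z where z: "b < z" "z < a" "a powr p - b powr p = (a - b) * (p * z powr (p - 1))"
      using MVT2[of b a "\<lambda>z. z powr p" "\<lambda>z. p * z powr (p - 1)"] 2 D assms by force
    have "b powr (p - 1) \<le> z powr (p - 1)" using z assms by (intro powr_mono2) auto
    then have "p * b powr (p - 1) * (a - b) \<le> p * z powr (p - 1) * (a - b)"
      using 2 assms by (intro mult_right_mono mult_left_mono) auto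
    then show ?thesis using z rb by (simp add: algebra_simps)
  next
    case 3
    obtain z where z: "a < z" "z < b" "b powr p - a powr p = (b - a) * (p * z powr (p - 1))"
      using MVT2[of a b "\<lambda>z. z powr p" "\<lambda>z. p * z powr (p - 1)"] 3 D assms by force
    have "z powr (p - 1) \<le> b powr (p - 1)" using z assms by (intro powr_mono2) auto
    then have "p * z powr (p - 1) * (b - a) \<le> p * b powr (p - 1) * (b - a)"
      using 3 assms by (intro mult_right_mono mult_left_mono) auto
    then show ?thesis using z rb by (simp add: algebra_simps)
  qed
qed

lemma convex_lb:
  fixes a b p :: real
  assumes "0 \<le> a" "0 \<le> b" "1 \<le> p"
  shows "p * rpow b (p - 1) * (a - b) \<le> a powr p - b powr p"
proof -
  consider "a > 0" "b > 0" | "b = 0" | "a = 0" "b > 0" using assms by linarith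
  then show ?thesis
  proof cases
    case 1 then show ?thesis using convex_lb_pos assms by auto
  next
    case 2
    then show ?thesis using assms
      by (cases "p = 1") (auto simp: rpow_def)
  next
    case 3
    have "b powr p = b * b powr (p - 1)"
      using 3 by (simp add: powr_mult_base)
    moreover have "b * b powr (p - 1) \<le> p * (b * b powr (p - 1))"
      using 3 assms mult_right_mono[of 1 p "b * b powr (p - 1)"] by simp
    ultimately show ?thesis using 3 assms
      by (cases "p = 1") (auto simp: rpow_def algebra_simps)
  qed
qed

lemma powr_diff_bound:
  fixes a b p :: real
  assumes "0 \<le> a" "0 \<le> b" "1 \<le> p"
  shows "\<bar>a powr p - b powr p\<bar> \<le> p * \<bar>a - b\<bar> * (rpow a (p - 1) + rpow b (p - 1))"
proof -
  have l1: "p * rpow b (p - 1) * (a - b) \<le> a powr p - b powr p" using convex_lb assms by blast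
  have l2: "p * rpow a (p - 1) * (b - a) \<le> b powr p - a powr p" using convex_lb assms by blast
  have ra: "0 \<le> rpow a (p - 1)" "0 \<le> rpow b (p - 1)" using assms by (auto simp: rpow_nonneg)
  have "- (p * \<bar>a - b\<bar> * rpow b (p - 1)) \<le> p * rpow b (p - 1) * (a - b)"
    using ra assms mult_right_mono[of "- \<bar>a - b\<bar>" "a - b" "p * rpow b (p - 1)"]
    by (simp add: algebra_simps)
  moreover have "p * rpow a (p - 1) * (a - b) \<le> p * \<bar>a - b\<bar> * rpow a (p - 1)"
    using ra assms mult_right_mono[of "a - b" "\<bar>a - b\<bar>" "p * rpow a (p - 1)"]
    by (simp add: algebra_simps)
  moreover have "0 \<le> p * \<bar>a - b\<bar> * rpow a (p - 1)" "0 \<le> p * \<bar>a - b\<bar> * rpow b (p - 1)"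
    using ra assms by auto
  ultimately show ?thesis using l1 l2 by (auto simp: abs_le_iff algebra_simps)
qed



lemma meas_cont:
  fixes f :: "'a::metric_space \<Rightarrow> real"
  assumes "sets M = sets borel" "continuous_on UNIV f"
  shows "f \<in> borel_measurable M"
  by (subst measurable_cong_sets[OF assms(1) refl]) (rule borel_measurable_continuous_onI[OF assms(2)])

lemma cont_dist_rpow: "0 \<le> r \<Longrightarrow> continuous_on UNIV (\<lambda>y. rpow (dist x y) r)"
  by (intro cont_rpow continuous_intros) auto

lemma Prob_rD: "M \<in> Prob_r r \<Longrightarrow> prob_space M" "M \<in> Prob_r r \<Longrightarrow> sets M = sets borel"
  by (auto simp: Prob_r_def)

lemma Prob_r_integrable:
  fixes M :: "'a::metric_space measure"
  assumes "M \<in> Prob_r r" "0 \<le> r"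
  shows "integrable M (\<lambda>y. rpow (dist x y) r)"
proof -
  obtain x1 where i1: "integrable M (\<lambda>y. rpow (dist x1 y) r)" and ps: "prob_space M"
    and sM: "sets M = sets borel"
    using assms(1) by (auto simp: Prob_r_def)
  interpret prob_space M by fact
  have "integrable M (\<lambda>y. 2 powr r * (rpow (dist x x1) r + rpow (dist x1 y) r))"
    using i1 by auto
  moreover have m: "(\<lambda>y. rpow (dist x y) r) \<in> borel_measurable M"
    using sM assms by (intro meas_cont cont_dist_rpow) auto
  moreover have "norm (rpow (dist x y) r) \<le> norm (2 powr r * (rpow (dist x x1) r + rpow (dist x1 y) r))" for y
  proof -
    have "rpow (dist x y) r \<le> rpow (dist x x1 + dist x1 y) r"
      using assms by (intro rpow_mono) (auto simp: dist_triangle)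
    also have "\<dots> \<le> 2 powr r * (rpow (dist x x1) r + rpow (dist x1 y) r)"
      using assms by (intro rpow_add_le) auto
    finally show ?thesis using rpow_nonneg[of "dist x y" r] by simp
  qed
  ultimately show ?thesis using Bochner_Integration.integrable_bound by (metis (no_types, lifting) AE_I2)
qed

lemma Prob_r_integrable_bound:
  fixes M :: "'a::metric_space measure"
  assumes "M \<in> Prob_r r" "0 \<le> r" "f \<in> borel_measurable M"
    and "\<And>y. \<bar>f y\<bar> \<le> \<alpha> + \<beta> * rpow (dist xo y) r"
  shows "integrable M f"
proof -
  interpret prob_space M using Prob_rD assms by blast
  have "integrable M (\<lambda>y. \<alpha> + \<beta> * rpow (dist xo y) r)"
    using Prob_r_integrable[OF assms(1,2)] by auto
  moreover have "norm (f y) \<le> norm (\<alpha> + \<beta> * rpow (dist xo y) r)" for y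
    using assms(4)[of y] by auto
  ultimately show ?thesis using assms(3) Bochner_Integration.integrable_bound by (metis (no_types, lifting) AE_I2)
qed

lemma Wp_bound:
  fixes a b :: "'a::metric_space"
  assumes "1 \<le> p"
  shows "\<bar>dist a y powr p - dist b y powr p\<bar> \<le>
     p * dist a b * (1 + 2 powr (p - 1)) * rpow (dist a y) (p - 1)
     + p * dist a b * 2 powr (p - 1) * rpow (dist a b) (p - 1)"
proof -
  have "\<bar>dist a y powr p - dist b y powr p\<bar> \<le> p * \<bar>dist a y - dist b y\<bar> * (rpow (dist a y) (p - 1) + rpow (dist b y) (p - 1))"
    using assms by (intro powr_diff_bound) auto
  also have "\<bar>dist a y - dist b y\<bar> \<le> dist a b" by metric
  then have "p * \<bar>dist a y - dist b y\<bar> * (rpow (dist a y) (p - 1) + rpow (dist b y) (p - 1)) \<le> p * dist a b * (rpow (dist a y) (p - 1) + rpow (dist b y) (p - 1))"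
    using assms rpow_nonneg[of "dist a y" "p - 1"] rpow_nonneg[of "dist b y" "p - 1"]
    by (intro mult_right_mono mult_left_mono) auto
  also have "rpow (dist b y) (p - 1) \<le> 2 powr (p - 1) * (rpow (dist a b) (p - 1) + rpow (dist a y) (p - 1))"
  proof -
    have "rpow (dist b y) (p - 1) \<le> rpow (dist a b + dist a y) (p - 1)"
      using assms by (intro rpow_mono) (auto simp: dist_triangle3)
    also have "\<dots> \<le> 2 powr (p - 1) * (rpow (dist a b) (p - 1) + rpow (dist a y) (p - 1))"
      using assms by (intro rpow_add_le) auto
    finally show ?thesis .
  qed
  then have "p * dist a b * (rpow (dist a y) (p - 1) + rpow (dist b y) (p - 1)) \<le>
     p * dist a b * (rpow (dist a y) (p - 1) + 2 powr (p - 1) * (rpow (dist a b) (p - 1) + rpow (dist a y) (p - 1)))"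
    using assms by (intro mult_left_mono) auto
  finally show ?thesis by (simp add: algebra_simps)
qed

lemma Wp_integrable:
  fixes M :: "'a::metric_space measure"
  assumes "M \<in> Prob_r (p - 1)" "1 \<le> p"
  shows "integrable M (\<lambda>y. dist a y powr p - dist b y powr p)"
proof (rule Prob_r_integrable_bound[OF assms(1)])
  show "(\<lambda>y. dist a y powr p - dist b y powr p) \<in> borel_measurable M"
    using Prob_rD[OF assms(1)] assms
    by (intro meas_cont continuous_intros cont_powr) auto
  show "\<bar>dist a y powr p - dist b y powr p\<bar> \<le>
     p * dist a b * 2 powr (p - 1) * rpow (dist a b) (p - 1) + p * dist a b * (1 + 2 powr (p - 1)) * rpow (dist a y) (p - 1)" for y
    using Wp_bound[OF assms(2), of a y b] by simp
qed (use assms in auto)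



lemma conv_fun:
  fixes Ms :: "nat \<Rightarrow> 'a::metric_space measure" and f :: "'a \<Rightarrow> real"
  assumes conv: "conv_wr r Ms M" and r: "0 \<le> r"
    and Ms: "\<And>n. Ms n \<in> Prob_r r" and M: "M \<in> Prob_r r"
    and f: "continuous_on UNIV f"
    and bd: "\<And>y. \<bar>f y\<bar> \<le> \<alpha> + \<beta> * rpow (dist xo y) r"
  shows "(\<lambda>n. integral\<^sup>L (Ms n) f) \<longlonglongrightarrow> integral\<^sup>L M f"
proof -
  define G where "G y = \<alpha> + \<beta> * rpow (dist xo y) r" for y
  have G0: "0 \<le> G y" for y using bd[of y] by (simp add: G_def)
  have cG: "continuous_on UNIV G" unfolding G_def using r
    by (intro continuous_intros cont_dist_rpow) auto
  have intG: "\<And>N. N \<in> Prob_r r \<Longrightarrow> integral\<^sup>L N G = \<alpha> + \<beta> * integral\<^sup>L N (\<lambda>y. rpow (dist xo y) r)"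
  proof -
    fix N :: "'a measure" assume N: "N \<in> Prob_r r"
    interpret prob_space N using Prob_rD[OF N] by blast
    show "integral\<^sup>L N G = \<alpha> + \<beta> * integral\<^sup>L N (\<lambda>y. rpow (dist xo y) r)"
      unfolding G_def using Prob_r_integrable[OF N r, of xo]
      by (subst Bochner_Integration.integral_add) (auto simp: prob_space)
  qed
  have Gconv: "(\<lambda>n. integral\<^sup>L (Ms n) G) \<longlonglongrightarrow> integral\<^sup>L M G"
    unfolding intG[OF Ms] intG[OF M]
    using conv unfolding conv_wr_def by (intro tendsto_intros) auto
  define fc where "fc K y = max (- K) (min K (f y))" for K y
  define gK where "gK K y = min (G y) K" for K y
  have cfc: "continuous_on UNIV (fc K)" for K unfolding fc_def using f
    by (intro continuous_intros)
  have cgK: "continuous_on UNIV (gK K)" for K unfolding gK_def using cG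
    by (intro continuous_intros)
  have bfc: "bounded (range (fc K))" if "0 \<le> K" for K
    unfolding bounded_iff fc_def using that by (intro exI[of _ K]) auto
  have bgK: "bounded (range (gK K))" if "0 \<le> K" for K
    unfolding bounded_iff gK_def using that G0 by (intro exI[of _ K]) auto
  have conv1: "\<And>h::'a \<Rightarrow> real. continuous_on UNIV h \<Longrightarrow> bounded (range h) \<Longrightarrow>
      (\<lambda>n. integral\<^sup>L (Ms n) h) \<longlonglongrightarrow> integral\<^sup>L M h"
    using conv unfolding conv_wr_def by auto
  have pw: "\<bar>f y - fc K y\<bar> \<le> G y - gK K y" if "0 \<le> K" for K y
    using bd[of y] that unfolding fc_def gK_def G_def by (auto simp: abs_le_iff max_def min_def)
  have ints: "integrable N (fc K)" "integrable N (gK K)" "integrable N G" "integrable N f"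
    if N: "N \<in> Prob_r r" and K: "0 \<le> K" for N K
  proof -
    have sN: "sets N = sets borel" using Prob_rD[OF N] by blast
    show "integrable N (fc K)"
      by (rule Prob_r_integrable_bound[OF N r meas_cont[OF sN cfc], where \<alpha>=K and \<beta>=0 and xo=xo])
        (use K in \<open>auto simp: fc_def\<close>)
    show "integrable N (gK K)"
      by (rule Prob_r_integrable_bound[OF N r meas_cont[OF sN cgK], where \<alpha>=K and \<beta>=0 and xo=xo])
        (use K G0 in \<open>auto simp: gK_def\<close>)
    show "integrable N G"
      by (rule Prob_r_integrable_bound[OF N r meas_cont[OF sN cG], where \<alpha>=\<alpha> and \<beta>=\<beta> and xo=xo])
        (use G0 in \<open>auto simp: G_def\<close>)
    show "integrable N f"
      by (rule Prob_r_integrable_bound[OF N r meas_cont[OF sN f], where \<alpha>=\<alpha> and \<beta>=\<beta> and xo=xo])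
        (use bd in auto)
  qed
  have errN: "\<bar>integral\<^sup>L N f - integral\<^sup>L N (fc K)\<bar> \<le> integral\<^sup>L N (\<lambda>y. G y - gK K y)"
    if N: "N \<in> Prob_r r" and K: "0 \<le> K" for N K
  proof -
    have "integral\<^sup>L N f - integral\<^sup>L N (fc K) = integral\<^sup>L N (\<lambda>y. f y - fc K y)"
      using ints[OF N K] by (subst Bochner_Integration.integral_diff) auto
    also have "\<bar>\<dots>\<bar> \<le> integral\<^sup>L N (\<lambda>y. \<bar>f y - fc K y\<bar>)"
      by (rule integral_abs_bound)
    also have "\<dots> \<le> integral\<^sup>L N (\<lambda>y. G y - gK K y)"
      using ints[OF N K] pw[OF K] by (intro integral_mono) auto
    finally show ?thesis .
  qed
  have dom: "(\<lambda>m. integral\<^sup>L M (\<lambda>y. G y - gK (real m) y)) \<longlonglongrightarrow> integral\<^sup>L M (\<lambda>y. 0)"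
  proof (rule integral_dominated_convergence[where w = G])
    have sM: "sets M = sets borel" using Prob_rD[OF M] by blast
    show "(\<lambda>y. 0::real) \<in> borel_measurable M" by simp
    show "(\<lambda>y. G y - gK (real m) y) \<in> borel_measurable M" for m
      using meas_cont[OF sM cG] meas_cont[OF sM cgK[of "real m"]] by measurable
    show "integrable M G" using ints[OF M, of 0] by simp
    show "AE y in M. (\<lambda>m. G y - gK (real m) y) \<longlonglongrightarrow> 0"
    proof (intro AE_I2)
      fix y
      obtain m0 :: nat where "G y \<le> real m0" using real_arch_simple by blast
      then have "\<forall>m\<ge>m0. G y - gK (real m) y = 0"
        unfolding gK_def by auto
      then show "(\<lambda>m. G y - gK (real m) y) \<longlonglongrightarrow> 0"
        by (intro tendsto_eventually) (auto simp: eventually_sequentially)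
    qed
    show "AE y in M. norm (G y - gK (real m) y) \<le> G y" for m
      using G0 by (intro AE_I2) (auto simp: gK_def)
  qed
  show ?thesis
  proof (rule LIMSEQ_I)
    fix e :: real assume e: "0 < e"
    from dom have "eventually (\<lambda>m. integral\<^sup>L M (\<lambda>y. G y - gK (real m) y) < e / 4) sequentially"
      using e by (intro order_tendstoD) auto
    then obtain m where m: "integral\<^sup>L M (\<lambda>y. G y - gK (real m) y) < e / 4"
      by (auto simp: eventually_sequentially)
    define K where "K = real m"
    have K: "0 \<le> K" by (simp add: K_def)
    have intsplit: "integral\<^sup>L N (\<lambda>y. G y - gK K y) = integral\<^sup>L N G - integral\<^sup>L N (gK K)"
      if "N \<in> Prob_r r" for N
      using ints[OF that K] by (subst Bochner_Integration.integral_diff) auto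
    have c1: "(\<lambda>n. integral\<^sup>L (Ms n) (fc K)) \<longlonglongrightarrow> integral\<^sup>L M (fc K)"
      using conv1 cfc bfc K by blast
    have c2: "(\<lambda>n. integral\<^sup>L (Ms n) (\<lambda>y. G y - gK K y)) \<longlonglongrightarrow> integral\<^sup>L M (\<lambda>y. G y - gK K y)"
      unfolding intsplit[OF Ms] intsplit[OF M]
      using conv1 cgK bgK K Gconv by (intro tendsto_intros) auto
    have ev1: "eventually (\<lambda>n. dist (integral\<^sup>L (Ms n) (fc K)) (integral\<^sup>L M (fc K)) < e / 4) sequentially"
      using c1[unfolded tendsto_iff, rule_format, of "e/4"] e by simp
    have ev2: "eventually (\<lambda>n. dist (integral\<^sup>L (Ms n) (\<lambda>y. G y - gK K y)) (integral\<^sup>L M (\<lambda>y. G y - gK K y)) < e / 4) sequentially"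
      using c2[unfolded tendsto_iff, rule_format, of "e/4"] e by simp
    from eventually_conj[OF ev1 ev2] obtain N where
      N: "\<And>n. n \<ge> N \<Longrightarrow> dist (integral\<^sup>L (Ms n) (fc K)) (integral\<^sup>L M (fc K)) < e / 4 \<and>
            dist (integral\<^sup>L (Ms n) (\<lambda>y. G y - gK K y)) (integral\<^sup>L M (\<lambda>y. G y - gK K y)) < e / 4"
      by (auto simp: eventually_sequentially)
    show "\<exists>no. \<forall>n\<ge>no. norm (integral\<^sup>L (Ms n) f - integral\<^sup>L M f) < e"
    proof (intro exI allI impI)
      fix n assume n: "N \<le> n"
      have a: "\<bar>integral\<^sup>L (Ms n) f - integral\<^sup>L (Ms n) (fc K)\<bar> \<le> integral\<^sup>L (Ms n) (\<lambda>y. G y - gK K y)"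
        using errN[OF Ms K] .
      have b: "\<bar>integral\<^sup>L M f - integral\<^sup>L M (fc K)\<bar> \<le> integral\<^sup>L M (\<lambda>y. G y - gK K y)"
        using errN[OF M K] .
      show "norm (integral\<^sup>L (Ms n) f - integral\<^sup>L M f) < e"
        using N[OF n] a b m unfolding K_def dist_real_def real_norm_def by arith
    qed
  qed
qed



lemma Wp_conv_fixed:
  fixes Ms :: "nat \<Rightarrow> 'a::metric_space measure"
  assumes p: "1 \<le> p" and Ms: "\<And>n. Ms n \<in> Prob_r (p - 1)" and M: "M \<in> Prob_r (p - 1)"
    and conv: "conv_wr (p - 1) Ms M"
  shows "(\<lambda>n. Wp (Ms n) p a b) \<longlonglongrightarrow> Wp M p a b"
  unfolding Wp_def
proof (rule conv_fun[OF conv _ Ms M, where xo = a])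
  show "continuous_on UNIV (\<lambda>y. dist a y powr p - dist b y powr p)"
    using p by (intro continuous_intros cont_powr) auto
  show "\<bar>dist a y powr p - dist b y powr p\<bar> \<le>
     p * dist a b * 2 powr (p - 1) * rpow (dist a b) (p - 1) + p * dist a b * (1 + 2 powr (p - 1)) * rpow (dist a y) (p - 1)" for y
    using Wp_bound[OF p, of a y b] by simp
qed (use p in auto)

lemma Wp_diff:
  fixes N :: "'a::metric_space measure"
  assumes p: "1 \<le> p" and N: "N \<in> Prob_r (p - 1)"
  shows "\<bar>Wp N p b x' - Wp N p z x'\<bar> \<le>
    p * dist z b * (1 + 2 powr (p - 1)) * integral\<^sup>L N (\<lambda>y. rpow (dist z y) (p - 1))
    + p * dist z b * 2 powr (p - 1) * rpow (dist z b) (p - 1)"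
proof -
  interpret prob_space N using Prob_rD[OF N] by blast
  have i1: "integrable N (\<lambda>y. dist b y powr p - dist x' y powr p)"
    and i2: "integrable N (\<lambda>y. dist z y powr p - dist x' y powr p)"
    and i3: "integrable N (\<lambda>y. dist z y powr p - dist b y powr p)"
    using Wp_integrable[OF N p] by auto
  have i4: "integrable N (\<lambda>y. rpow (dist z y) (p - 1))" using Prob_r_integrable[OF N] p by auto
  have "Wp N p b x' - Wp N p z x' = integral\<^sup>L N (\<lambda>y. (dist b y powr p - dist x' y powr p) - (dist z y powr p - dist x' y powr p))"
    unfolding Wp_def using i1 i2 by (subst Bochner_Integration.integral_diff) auto
  also have "\<dots> = integral\<^sup>L N (\<lambda>y. dist b y powr p - dist z y powr p)" by simp
  also have "\<bar>\<dots>\<bar> \<le> integral\<^sup>L N (\<lambda>y. \<bar>dist b y powr p - dist z y powr p\<bar>)"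
    by (rule integral_abs_bound)
  also have "\<dots> = integral\<^sup>L N (\<lambda>y. \<bar>dist z y powr p - dist b y powr p\<bar>)"
    by (simp add: abs_minus_commute)
  also have "\<dots> \<le> integral\<^sup>L N (\<lambda>y. p * dist z b * 2 powr (p - 1) * rpow (dist z b) (p - 1) + p * dist z b * (1 + 2 powr (p - 1)) * rpow (dist z y) (p - 1))"
    using i3 i4 Wp_bound[OF p, of z _ b] by (intro integral_mono) (auto simp: algebra_simps)
  also have "\<dots> = p * dist z b * 2 powr (p - 1) * rpow (dist z b) (p - 1) + p * dist z b * (1 + 2 powr (p - 1)) * integral\<^sup>L N (\<lambda>y. rpow (dist z y) (p - 1))"
    using i4 by (subst Bochner_Integration.integral_add) (auto simp: prob_space)
  finally show ?thesis by (simp add: algebra_simps)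
qed

lemma limit_in_Mp:
  fixes Ms :: "nat \<Rightarrow> 'a::metric_space measure"
  assumes p: "1 \<le> p" and Ms: "\<And>n. Ms n \<in> Prob_r (p - 1)" and M: "M \<in> Prob_r (p - 1)"
    and conv: "conv_wr (p - 1) Ms M"
    and eps: "eps \<longlonglongrightarrow> 0" and xs: "\<And>n. xs n \<in> Mp_eps (Ms n) p (eps n)"
    and s: "strict_mono s" and lim: "(xs \<circ> s) \<longlonglongrightarrow> z"
  shows "z \<in> Mp M p"
  unfolding Mp_def Mp_eps_def
proof (intro CollectI allI)
  fix x'
  define \<delta> where "\<delta> n = dist z (xs (s n))" for n
  have \<delta>: "\<delta> \<longlonglongrightarrow> 0" unfolding \<delta>_def using lim
    using tendsto_dist_iff[THEN iffD1, OF lim] by (simp add: o_def dist_commute)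
  define I where "I n = integral\<^sup>L (Ms (s n)) (\<lambda>y. rpow (dist z y) (p - 1))" for n
  have I: "I \<longlonglongrightarrow> integral\<^sup>L M (\<lambda>y. rpow (dist z y) (p - 1))"
    unfolding I_def using conv LIMSEQ_subseq_LIMSEQ[OF _ s, of "\<lambda>n. integral\<^sup>L (Ms n) (\<lambda>y. rpow (dist z y) (p - 1))"]
    unfolding conv_wr_def by (auto simp: o_def)
  define b where "b n = p * \<delta> n * (1 + 2 powr (p - 1)) * I n + p * 2 powr (p - 1) * (\<delta> n * rpow (\<delta> n) (p - 1))" for n
  have sq: "(\<lambda>n. \<delta> n * rpow (\<delta> n) (p - 1)) \<longlonglongrightarrow> 0"
  proof (rule tendsto_sandwich[of "\<lambda>_. 0" _ _ \<delta>])
    show "\<forall>\<^sub>F n in sequentially. 0 \<le> \<delta> n * rpow (\<delta> n) (p - 1)"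
      by (auto simp: \<delta>_def rpow_nonneg)
    have "\<forall>\<^sub>F n in sequentially. \<delta> n < 1" using \<delta> by (intro order_tendstoD) auto
    then show "\<forall>\<^sub>F n in sequentially. \<delta> n * rpow (\<delta> n) (p - 1) \<le> \<delta> n"
    proof eventually_elim
      case (elim n)
      have "rpow (\<delta> n) (p - 1) \<le> 1"
      proof (cases "p = 1")
        case True then show ?thesis by (simp add: rpow_def)
      next
        case False
        have "\<delta> n powr (p - 1) \<le> 1 powr (p - 1)" using elim p False by (intro powr_mono2) (auto simp: \<delta>_def)
        then show ?thesis using False by (simp add: rpow_def)
      qed
      then show ?case using mult_left_mono[of "rpow (\<delta> n) (p - 1)" 1 "\<delta> n"] by (simp add: \<delta>_def)
    qed
  qed (use \<delta> in auto)
  have b: "b \<longlonglongrightarrow> 0"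
  proof -
    have "b \<longlonglongrightarrow> p * 0 * (1 + 2 powr (p - 1)) * integral\<^sup>L M (\<lambda>y. rpow (dist z y) (p - 1)) + p * 2 powr (p - 1) * 0"
      unfolding b_def by (intro tendsto_intros \<delta> I sq)
    then show ?thesis by simp
  qed
  have W1: "(\<lambda>n. Wp (Ms (s n)) p z x') \<longlonglongrightarrow> Wp M p z x'"
    using LIMSEQ_subseq_LIMSEQ[OF Wp_conv_fixed[OF p Ms M conv, of z x'] s] by (simp add: o_def)
  have le: "Wp (Ms (s n)) p z x' \<le> eps (s n) + b n" for n
  proof -
    have "\<bar>Wp (Ms (s n)) p (xs (s n)) x' - Wp (Ms (s n)) p z x'\<bar> \<le> b n"
      using Wp_diff[OF p Ms, of "s n" "xs (s n)" x' z] unfolding b_def \<delta>_def I_def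
      by (simp add: algebra_simps)
    moreover have "Wp (Ms (s n)) p (xs (s n)) x' \<le> eps (s n)"
      using xs[of "s n"] unfolding Mp_eps_def by auto
    ultimately show ?thesis by linarith
  qed
  have "(\<lambda>n. eps (s n) + b n) \<longlonglongrightarrow> 0 + 0"
    using LIMSEQ_subseq_LIMSEQ[OF eps s] b by (intro tendsto_add) (auto simp: o_def)
  then show "Wp M p z x' \<le> 0"
    using W1 le by (intro LIMSEQ_le[OF W1]) auto
qed



lemma bounded_minimizers:
  fixes Ms :: "nat \<Rightarrow> 'a::metric_space measure"
  assumes p: "1 \<le> p" and Ms: "\<And>n. Ms n \<in> Prob_r (p - 1)" and M: "M \<in> Prob_r (p - 1)"
    and conv: "conv_wr (p - 1) Ms M"
    and eps: "eps \<longlonglongrightarrow> 0" and xs: "\<And>n. xs n \<in> Mp_eps (Ms n) p (eps n)"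
  shows "bdd_above (range (\<lambda>n. dist (xs n) ob))"
proof -
  define \<eta> where "\<eta> = 1 / (4 * p)"
  have \<eta>: "0 < \<eta>" "\<eta> \<le> 1/4" "p * \<eta> = 1/4" using p by (auto simp: \<eta>_def field_simps)
  define ch where "ch R y = min 1 (max 0 (2 - dist ob y / R))" for R y
  define Ph where "Ph R y = (1 - ch R y) * (1 + rpow (dist ob y) (p - 1))" for R y
  have ch01: "0 \<le> ch R y" "ch R y \<le> 1" for R y by (auto simp: ch_def)
  have rp0: "0 \<le> rpow (dist ob y) (p - 1)" for y by (simp add: rpow_nonneg)
  have cch: "continuous_on UNIV (ch R)" for R
  proof (cases "R = 0")
    case True then show ?thesis unfolding ch_def by simp
  next
    case False then show ?thesis unfolding ch_def by (intro continuous_intros) auto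
  qed
  have cPh: "continuous_on UNIV (Ph R)" for R unfolding Ph_def using p
    by (intro continuous_intros cch cont_dist_rpow) auto
  have bPh: "\<bar>Ph R y\<bar> \<le> 1 + 1 * rpow (dist ob y) (p - 1)" for R y
  proof -
    have "0 \<le> Ph R y" unfolding Ph_def using ch01[of R y] rp0[of y] by auto
    moreover have "Ph R y \<le> 1 * (1 + rpow (dist ob y) (p - 1))" unfolding Ph_def
      using ch01[of R y] rp0[of y] by (intro mult_right_mono) auto
    ultimately show ?thesis by simp
  qed
  have sMs: "sets (Ms n) = sets borel" for n using Prob_rD[OF Ms] by blast
  have sM: "sets M = sets borel" using Prob_rD[OF M] by blast
  interpret PM: prob_space M using Prob_rD[OF M] by blast
  have dom: "(\<lambda>m. integral\<^sup>L M (Ph (real m + 1))) \<longlonglongrightarrow> integral\<^sup>L M (\<lambda>y. 0)"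
  proof (rule integral_dominated_convergence[where w = "\<lambda>y. 1 + rpow (dist ob y) (p - 1)"])
    show "(\<lambda>y. 0::real) \<in> borel_measurable M" by simp
    show "Ph (real m + 1) \<in> borel_measurable M" for m using meas_cont[OF sM cPh] .
    show "integrable M (\<lambda>y. 1 + rpow (dist ob y) (p - 1))"
      using Prob_r_integrable[OF M, of ob] p PM.integrable_const by auto
    show "AE y in M. (\<lambda>m. Ph (real m + 1) y) \<longlonglongrightarrow> 0"
    proof (intro AE_I2)
      fix y
      obtain m0 :: nat where m0: "dist ob y \<le> real m0" using real_arch_simple by blast
      have "Ph (real m + 1) y = 0" if "m \<ge> m0" for m
      proof -
        define q where "q = dist ob y / (real m + 1)"
        have "q \<le> 1" using m0 that unfolding q_def by (simp add: field_simps)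
        then have "min 1 (max 0 (2 - q)) = 1" by (simp add: min_def max_def)
        then have "ch (real m + 1) y = 1" unfolding ch_def q_def by simp
        then show ?thesis unfolding Ph_def by simp
      qed
      then show "(\<lambda>m. Ph (real m + 1) y) \<longlonglongrightarrow> 0"
        by (intro tendsto_eventually) (auto simp: eventually_sequentially)
    qed
    show "AE y in M. norm (Ph (real m + 1) y) \<le> 1 + rpow (dist ob y) (p - 1)" for m
      using bPh by (intro AE_I2) auto
  qed
  have "eventually (\<lambda>m. integral\<^sup>L M (Ph (real m + 1)) < \<eta> / 2) sequentially"
    using dom \<eta> by (intro order_tendstoD) auto
  then obtain m where m: "integral\<^sup>L M (Ph (real m + 1)) < \<eta> / 2"
    by (auto simp: eventually_sequentially)
  define R where "R = real m + 1"
  have R: "0 < R" by (simp add: R_def)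
  have cv: "(\<lambda>n. integral\<^sup>L (Ms n) (Ph R)) \<longlonglongrightarrow> integral\<^sup>L M (Ph R)"
    by (rule conv_fun[OF conv _ Ms M cPh bPh]) (use p in auto)
  have ev1: "eventually (\<lambda>n. integral\<^sup>L (Ms n) (Ph R) < \<eta>) sequentially"
    using order_tendstoD(2)[OF cv, of \<eta>] m \<eta> unfolding R_def by auto
  have ev2: "eventually (\<lambda>n. eps n < 1) sequentially"
    using eps by (intro order_tendstoD) auto
  define c where "c = 2 * R + (2 * R) powr p"
  define Bnd where "Bnd = 2 * R + 1 + c + 2 + 3 * c / 2"
  have c0: "0 \<le> c" using R by (simp add: c_def)
  have evB: "eventually (\<lambda>n. dist (xs n) ob \<le> Bnd) sequentially"
    using eventually_conj[OF ev1 ev2]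
  proof eventually_elim
    case (elim n)
    define D where "D = dist (xs n) ob"
    show ?case
    proof (rule ccontr)
      assume "\<not> dist (xs n) ob \<le> Bnd"
      then have DB: "D > Bnd" by (simp add: D_def)
      then have D1: "D \<ge> 2 * R + 1" unfolding Bnd_def using c0 by simp
      define K where "K = D - c"
      have K0: "K > 0" using DB c0 R unfolding K_def Bnd_def by simp
      define fn where "fn y = dist (xs n) y powr p - dist ob y powr p" for y
      define lb where "lb y = ch R y * K - (1 - ch R y) * (p * D * rpow (dist ob y) (p - 1))" for y
      have pw: "lb y \<le> fn y" for y
      proof -
        have tri: "dist ob y \<le> dist (xs n) y + D" unfolding D_def by metric
        have l1: "- (p * D * rpow (dist ob y) (p - 1)) \<le> fn y"
        proof -
          have "p * rpow (dist ob y) (p - 1) * (dist (xs n) y - dist ob y) \<le> fn y"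
            unfolding fn_def using p by (intro convex_lb) auto
          moreover have "- (p * D * rpow (dist ob y) (p - 1)) \<le> p * rpow (dist ob y) (p - 1) * (dist (xs n) y - dist ob y)"
            using tri p rp0[of y] mult_left_mono[of "- D" "dist (xs n) y - dist ob y" "p * rpow (dist ob y) (p - 1)"]
            by (simp add: algebra_simps)
          ultimately show ?thesis by linarith
        qed
        show ?thesis
        proof (cases "ch R y = 0")
          case True then show ?thesis using l1 unfolding lb_def by simp
        next
          case False
          then have "dist ob y / R < 2" unfolding ch_def by (auto simp: min_def max_def split: if_splits)
          then have b2: "dist ob y < 2 * R" using R by (simp add: field_simps)
          have tri2: "D \<le> dist (xs n) y + dist ob y" unfolding D_def by metric
          have a1: "dist (xs n) y \<ge> D - 2 * R" using tri2 b2 by linarith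
          have "dist (xs n) y \<le> dist (xs n) y powr p"
            using a1 D1 p powr_mono[of 1 p "dist (xs n) y"] by auto
          moreover have "dist ob y powr p \<le> (2 * R) powr p"
            using b2 p by (intro powr_mono2) auto
          ultimately have l2: "K \<le> fn y" unfolding fn_def K_def c_def using a1 by linarith
          have "lb y \<le> ch R y * fn y + (1 - ch R y) * fn y"
          proof -
            have "ch R y * K \<le> ch R y * fn y" using ch01[of R y] l2 by (intro mult_left_mono) auto
            moreover have "(1 - ch R y) * (- (p * D * rpow (dist ob y) (p - 1))) \<le> (1 - ch R y) * fn y"
              using ch01[of R y] l1 by (intro mult_left_mono) auto
            ultimately show ?thesis unfolding lb_def by (simp add: algebra_simps)
          qed
          then show ?thesis by (simp add: algebra_simps)
        qed
      qed
      interpret N: prob_space "Ms n" using Prob_rD[OF Ms] by blast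
      have iA: "integrable (Ms n) (ch R)"
        by (rule Prob_r_integrable_bound[OF Ms _ meas_cont[OF sMs cch], where \<alpha>=1 and \<beta>=0 and xo=ob])
          (use p ch01 in auto)
      have iB: "integrable (Ms n) (\<lambda>y. (1 - ch R y) * rpow (dist ob y) (p - 1))"
      proof (rule Prob_r_integrable_bound[OF Ms _ _, where \<alpha>=0 and \<beta>=1 and xo=ob])
        show "(\<lambda>y. (1 - ch R y) * rpow (dist ob y) (p - 1)) \<in> borel_measurable (Ms n)"
          using p by (intro meas_cont[OF sMs] continuous_intros cch cont_dist_rpow) auto
        show "\<bar>(1 - ch R y) * rpow (dist ob y) (p - 1)\<bar> \<le> 0 + 1 * rpow (dist ob y) (p - 1)" for y
          using ch01[of R y] rp0[of y] mult_right_mono[of "1 - ch R y" 1 "rpow (dist ob y) (p - 1)"]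
          by (auto simp: abs_mult)
      qed (use p in auto)
      have iC: "integrable (Ms n) (\<lambda>y. 1 - ch R y)" using iA by auto
      define A where "A = integral\<^sup>L (Ms n) (ch R)"
      define Bq where "Bq = integral\<^sup>L (Ms n) (\<lambda>y. (1 - ch R y) * rpow (dist ob y) (p - 1))"
      define C where "C = integral\<^sup>L (Ms n) (\<lambda>y. 1 - ch R y)"
      have AC: "A + C = 1" unfolding A_def C_def using iA
        by (subst Bochner_Integration.integral_diff) (auto simp: N.prob_space)
      have CB: "C + Bq < \<eta>"
      proof -
        have "integral\<^sup>L (Ms n) (Ph R) = C + Bq" unfolding Ph_def C_def Bq_def using iB iC
          by (subst Bochner_Integration.integral_add[symmetric]) (auto simp: algebra_simps)
        then show ?thesis using elim by simp
      qed
      have C0: "0 \<le> C" unfolding C_def using ch01 by (intro integral_nonneg_AE AE_I2) auto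
      have B0: "0 \<le> Bq" unfolding Bq_def using ch01 rp0 by (intro integral_nonneg_AE AE_I2) auto
      have e: "lb = (\<lambda>y. K * ch R y - (p * D) * ((1 - ch R y) * rpow (dist ob y) (p - 1)))"
        unfolding lb_def by (auto simp: algebra_simps)
      have ilb: "integral\<^sup>L (Ms n) lb = K * A - p * D * Bq"
      proof -
        have "integral\<^sup>L (Ms n) (\<lambda>y. K * ch R y - (p * D) * ((1 - ch R y) * rpow (dist ob y) (p - 1)))
          = integral\<^sup>L (Ms n) (\<lambda>y. K * ch R y) - integral\<^sup>L (Ms n) (\<lambda>y. (p * D) * ((1 - ch R y) * rpow (dist ob y) (p - 1)))"
          using iA iB by (intro Bochner_Integration.integral_diff) auto
        then have "integral\<^sup>L (Ms n) lb = K * A - p * D * Bq" unfolding e A_def Bq_def by simp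
        then show ?thesis unfolding A_def Bq_def by simp
      qed
      have ifn: "integrable (Ms n) fn" unfolding fn_def using Wp_integrable[OF Ms p] by auto
      have ilbi: "integrable (Ms n) lb" unfolding e using iA iB by auto
      have "integral\<^sup>L (Ms n) lb \<le> integral\<^sup>L (Ms n) fn"
        using ifn ilbi pw by (intro integral_mono) auto
      also have "\<dots> = Wp (Ms n) p (xs n) ob" unfolding fn_def Wp_def by simp
      also have "\<dots> \<le> eps n" using xs[of n] unfolding Mp_eps_def by auto
      finally have E: "K * A - p * D * Bq \<le> eps n" using ilb by simp
      have "K * (1 - \<eta>) \<le> K * A" using AC C0 CB B0 K0 by (intro mult_left_mono) auto
      moreover have "p * D * Bq \<le> p * D * \<eta>" using CB C0 B0 D1 R p
        by (intro mult_left_mono) auto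
      moreover have "p * D * \<eta> = D / 4" using \<eta>(3) by (simp add: algebra_simps)
      moreover have "K * (1 - \<eta>) \<ge> K * (3/4)" using \<eta> K0 by (intro mult_left_mono) auto
      ultimately have "K * (3/4) - D / 4 < 1" using E elim by linarith
      then show False using DB R unfolding K_def Bnd_def using c0 by (simp add: algebra_simps)
    qed
  qed
  then obtain N where N: "\<And>n. n \<ge> N \<Longrightarrow> dist (xs n) ob \<le> Bnd" by (auto simp: eventually_sequentially)
  define Bf where "Bf = max Bnd (Max ((\<lambda>n. dist (xs n) ob) ` {..N}))"
  have "dist (xs n) ob \<le> Bf" for n
  proof (cases "n \<le> N")
    case True then show ?thesis unfolding Bf_def by (intro max.coboundedI2 Max_ge) auto
  next
    case False then show ?thesis using N[of n] unfolding Bf_def by auto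
  qed
  then show ?thesis by (intro bdd_aboveI2) auto
qed



fun maxf :: "(nat \<Rightarrow> 'a \<Rightarrow> real) \<Rightarrow> nat \<Rightarrow> 'a \<Rightarrow> real" where
  "maxf g 0 y = g 0 y"
| "maxf g (Suc m) y = max (maxf g m y) (g (Suc m) y)"

lemma maxf_ge: "k \<le> m \<Longrightarrow> g k y \<le> maxf g m y"
  by (induction m) (auto simp: le_Suc_eq max.coboundedI1)

lemma maxf_attained: "\<exists>k\<le>m. maxf g m y = g k y"
proof (induction m)
  case 0 then show ?case by auto
next
  case (Suc m)
  then obtain k where "k \<le> m" "maxf g m y = g k y" by auto
  then show ?case by (cases "maxf g m y \<le> g (Suc m) y") (auto simp: max_def intro: exI[of _ "Suc m"] exI[of _ k])
qed

lemma maxf_cont: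
  fixes g :: "nat \<Rightarrow> 'a::topological_space \<Rightarrow> real"
  assumes "\<And>k. continuous_on UNIV (g k)"
  shows "continuous_on UNIV (maxf g m)"
proof (induction m)
  case 0
  have "maxf g 0 = g 0" by (rule ext) simp
  then show ?case using assms by simp
next
  case (Suc m)
  have "maxf g (Suc m) = (\<lambda>y. max (maxf g m y) (g (Suc m) y))" by (rule ext) simp
  then show ?case using Suc assms by (simp add: continuous_on_max)
qed

lemma dense_seq:
  assumes "separable_space (euclidean :: 'a::metric_space topology)"
  shows "\<exists>cc::nat \<Rightarrow> 'a. \<forall>y e. 0 < e \<longrightarrow> (\<exists>k. dist (cc k) y < e)"
proof -
  obtain C :: "'a set" where C: "countable C" "closure C = UNIV"
    using assms unfolding separable_space_def by auto
  have "C \<noteq> {}" using C by auto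
  then have rC: "range (from_nat_into C) = C" using C by simp
  show ?thesis
  proof (rule exI[of _ "from_nat_into C"], intro allI impI)
    fix y :: 'a and e :: real assume e: "0 < e"
    have "y \<in> closure C" using C by simp
    then obtain c where "c \<in> C" "dist c y < e" using e closure_approachable by metis
    then show "\<exists>k. dist (from_nat_into C k) y < e" using rC by (metis rangeE)
  qed
qed



lemma key_point:
  fixes Ms :: "nat \<Rightarrow> 'a::metric_space measure" and zs :: "nat \<Rightarrow> 'a" and cc :: "nat \<Rightarrow> 'a"
  assumes p: "1 \<le> p" and Ms: "\<And>n. Ms n \<in> Prob_r (p - 1)" and M: "M \<in> Prob_r (p - 1)"
    and conv: "conv_wr (p - 1) Ms M"
    and r: "strict_mono r"
    and eps: "eps \<longlonglongrightarrow> 0" and zs: "\<And>n. zs n \<in> Mp_eps (Ms (r n)) p (eps (r n))"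
    and dense: "\<And>y e. 0 < e \<Longrightarrow> \<exists>k. dist (cc k) y < e"
    and W2: "\<And>y. ereal (dist x y) \<le> liminf (\<lambda>n. ereal (dist (zs n) y))"
    and D: "\<And>n. dist (zs n) x \<le> D"
  shows "\<exists>y. liminf (\<lambda>n. ereal (dist (zs n) y)) = ereal (dist x y)"
proof -
  define H where "H y = liminf (\<lambda>n. ereal (dist (zs n) y))" for y
  have D0: "0 \<le> D" using D[of 0] zero_le_dist[of "zs 0" x] by linarith
  have Hup: "H y \<le> ereal (D + dist x y)" for y
  proof -
    have "H y \<le> liminf (\<lambda>n. ereal (D + dist x y))" unfolding H_def
    proof (intro Liminf_mono always_eventually allI)
      fix n
      have "dist (zs n) y \<le> dist (zs n) x + dist x y" by (rule dist_triangle)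
      then show "ereal (dist (zs n) y) \<le> ereal (D + dist x y)" using D[of n] by simp
    qed
    then show ?thesis by (simp add: Liminf_const)
  qed
  define h where "h y = real_of_ereal (H y)" for y
  have Hh: "H y = ereal (h y)" for y
    using W2[of y] Hup[of y] unfolding H_def[symmetric] h_def
    by (cases "H y") auto
  have hlo: "dist x y \<le> h y" for y using W2[of y] Hh[of y] unfolding H_def by simp
  have hup: "h y \<le> D + dist x y" for y using Hup[of y] Hh[of y] by simp
  have h0: "0 \<le> h y" for y using hlo[of y] zero_le_dist[of x y] by linarith
  have hlip: "h c \<le> h y + dist c y" for c y
  proof -
    have "H c \<le> liminf (\<lambda>n. ereal (dist (zs n) y) + ereal (dist c y))" unfolding H_def
    proof (intro Liminf_mono always_eventually allI)
      fix n
      have "dist (zs n) c \<le> dist (zs n) y + dist c y" by metric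
      then show "ereal (dist (zs n) c) \<le> ereal (dist (zs n) y) + ereal (dist c y)" by simp
    qed
    also have "\<dots> = H y + ereal (dist c y)" unfolding H_def
      by (rule Liminf_add_ereal_right) auto
    finally show ?thesis using Hh[of c] Hh[of y] by simp
  qed
  have hev: "eventually (\<lambda>n. h c - \<delta> < dist (zs n) c) sequentially" if "0 < \<delta>" for c \<delta>
  proof -
    have "ereal (h c - \<delta>) < H c" using Hh[of c] that by simp
    from less_LiminfD[OF this[unfolded H_def]] show ?thesis by simp
  qed
  have hcont: "continuous_on UNIV h"
    unfolding continuous_on_iff
  proof (intro ballI allI impI)
    fix y e assume "0 < (e::real)"
    show "\<exists>d>0. \<forall>y'\<in>UNIV. dist y' y < d \<longrightarrow> dist (h y') (h y) < e"
    proof (intro exI[of _ e] conjI ballI impI)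
      fix y' assume "dist y' y < e"
      then show "dist (h y') (h y) < e" using hlip[of y' y] hlip[of y y']
        by (simp add: dist_real_def dist_commute abs_less_iff)
    qed fact
  qed
  define g where "g k y = h (cc k) - dist (cc k) y" for k y
  define a where "a m y = max 0 (maxf g m y - 1 / (real m + 1))" for m y
  have a0: "0 \<le> a m y" for m y by (simp add: a_def)
  have gh: "g k y \<le> h y" for k y unfolding g_def using hlip[of "cc k" y] by simp
  have ah: "a m y \<le> h y" for m y
  proof -
    obtain k where k: "maxf g m y = g k y" using maxf_attained[of m g y] by blast
    have i: "0 \<le> 1 / (real m + 1)" by simp
    have "maxf g m y - 1 / (real m + 1) \<le> h y" using k gh[of k y] i by linarith
    then show ?thesis unfolding a_def using h0[of y] by simp
  qed
  have alim: "(\<lambda>m. a m y) \<longlonglongrightarrow> h y" for y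
  proof (rule LIMSEQ_I)
    fix e :: real assume e: "0 < e"
    obtain k where k: "dist (cc k) y < e / 3" using dense[of "e/3"] e by auto
    obtain N1 :: nat where N1: "1 / (real N1 + 1) < e / 3"
    proof -
      obtain N :: nat where "3 / e < real N" using reals_Archimedean2 by blast
      then have "1 / (real N + 1) < e / 3" using e by (simp add: field_simps)
      then show ?thesis using that by blast
    qed
    show "\<exists>no. \<forall>m\<ge>no. norm (a m y - h y) < e"
    proof (intro exI[of _ "max k N1"] allI impI)
      fix m assume m: "max k N1 \<le> m"
      have "1 / (real m + 1) \<le> 1 / (real N1 + 1)" using m by (intro divide_left_mono) auto
      moreover have "g k y \<le> maxf g m y" using m by (intro maxf_ge) auto
      moreover have "h y \<le> h (cc k) + dist y (cc k)" by (rule hlip)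
      ultimately have "h y - e < a m y" unfolding a_def g_def using k N1
        by (simp add: dist_commute)
      then show "norm (a m y - h y) < e" using ah[of m y] by simp
    qed
  qed
  have aev: "eventually (\<lambda>n. \<forall>y. a m y \<le> dist (zs n) y) sequentially" for m
  proof -
    have "eventually (\<lambda>n. \<forall>k\<in>{..m}. h (cc k) - 1 / (real m + 1) < dist (zs n) (cc k)) sequentially"
      by (intro eventually_ball_finite ballI hev) auto
    then show ?thesis
    proof eventually_elim
      case (elim n)
      show ?case
      proof
        fix y
        obtain k where k: "k \<le> m" "maxf g m y = g k y" using maxf_attained[of m g y] by blast
        have "dist (zs n) (cc k) \<le> dist (zs n) y + dist (cc k) y" by metric
        then have "maxf g m y - 1 / (real m + 1) \<le> dist (zs n) y"
          using elim k unfolding g_def by force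
        then show "a m y \<le> dist (zs n) y" unfolding a_def by simp
      qed
    qed
  qed
  define \<psi> where "\<psi> m y = max (a m y powr p - dist x y powr p) (- (p * D * rpow (dist x y) (p - 1)))" for m y
  define hp where "hp y = h y powr p - dist x y powr p" for y
  have rpx0: "0 \<le> rpow (dist x y) (p - 1)" for y by (simp add: rpow_nonneg)
  have pdr: "0 \<le> p * D * rpow (dist x y) (p - 1)" for y using p D0 rpx0[of y] by auto
  have hp0: "0 \<le> hp y" for y unfolding hp_def using hlo[of y] p by (simp add: powr_mono2)
  have cg: "continuous_on UNIV (g k)" for k unfolding g_def by (intro continuous_intros)
  have ca: "continuous_on UNIV (a m)" for m
  proof -
    have "a m = (\<lambda>y. max 0 (maxf g m y - 1 / (real m + 1)))" by (rule ext) (simp add: a_def)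
    then show ?thesis using maxf_cont[where g=g and m=m, OF cg] by (auto intro!: continuous_intros)
  qed
  have c\<psi>: "continuous_on UNIV (\<psi> m)" for m
  proof -
    have "\<psi> m = (\<lambda>y. max (a m y powr p - dist x y powr p) (- (p * D * rpow (dist x y) (p - 1))))"
      by (rule ext) (simp add: \<psi>_def)
    then show ?thesis using p a0
      by (auto intro!: continuous_intros cont_powr ca cont_dist_rpow)
  qed
  have chp: "continuous_on UNIV hp"
  proof -
    have "hp = (\<lambda>y. h y powr p - dist x y powr p)" by (rule ext) (simp add: hp_def)
    then show ?thesis using p h0 by (auto intro!: continuous_intros cont_powr hcont)
  qed
  define Gc where "Gc = p * D * 2 powr (p - 1) * rpow D (p - 1)"
  define Gb where "Gb = p * D * 2 powr (p - 1) + p * D"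
  have \<psi>bd: "\<bar>\<psi> m y\<bar> \<le> Gc + Gb * rpow (dist x y) (p - 1)" for m y
  proof -
    have up1: "hp y \<le> p * rpow (h y) (p - 1) * (h y - dist x y)"
      using convex_lb[of "dist x y" "h y" p] p h0[of y] unfolding hp_def by (simp add: algebra_simps)
    have "rpow (h y) (p - 1) \<le> rpow (D + dist x y) (p - 1)"
      using h0 hup p by (intro rpow_mono) auto
    also have "\<dots> \<le> 2 powr (p - 1) * (rpow D (p - 1) + rpow (dist x y) (p - 1))"
      using D0 p by (intro rpow_add_le) auto
    finally have r1: "rpow (h y) (p - 1) \<le> 2 powr (p - 1) * (rpow D (p - 1) + rpow (dist x y) (p - 1))" .
    have "p * rpow (h y) (p - 1) * (h y - dist x y) \<le> p * (2 powr (p - 1) * (rpow D (p - 1) + rpow (dist x y) (p - 1))) * D"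
      using r1 hup[of y] hlo[of y] p rpow_nonneg[of "h y" "p - 1"] h0[of y]
      by (intro mult_mono) (auto intro: mult_left_mono)
    also have "\<dots> = Gc + p * D * 2 powr (p - 1) * rpow (dist x y) (p - 1)"
      unfolding Gc_def by (simp add: algebra_simps)
    finally have up2: "hp y \<le> Gc + p * D * 2 powr (p - 1) * rpow (dist x y) (p - 1)" using up1 by linarith
    have "a m y powr p \<le> h y powr p" using a0 ah p by (intro powr_mono2) auto
    then have "\<psi> m y \<le> max (hp y) (- (p * D * rpow (dist x y) (p - 1)))"
      unfolding \<psi>_def hp_def by auto
    also have "\<dots> = hp y" using hp0[of y] pdr[of y] by (auto simp: max_def)
    finally have u: "\<psi> m y \<le> Gc + p * D * 2 powr (p - 1) * rpow (dist x y) (p - 1)" using up2 by linarith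
    have l: "- (p * D * rpow (dist x y) (p - 1)) \<le> \<psi> m y" unfolding \<psi>_def by simp
    have "0 \<le> Gc" unfolding Gc_def using p D0 by (auto simp: rpow_nonneg)
    moreover have "0 \<le> p * D * 2 powr (p - 1) * rpow (dist x y) (p - 1)" using p D0 rpx0[of y] by auto
    ultimately show ?thesis using u l pdr[of y] unfolding Gb_def by (auto simp: algebra_simps abs_le_iff)
  qed
  have sM: "sets M = sets borel" using Prob_rD[OF M] by blast
  interpret PM: prob_space M using Prob_rD[OF M] by blast
  have int\<psi>le: "integral\<^sup>L M (\<psi> m) \<le> 0" for m
  proof -
    have cv: "(\<lambda>n. integral\<^sup>L (Ms n) (\<psi> m)) \<longlonglongrightarrow> integral\<^sup>L M (\<psi> m)"
      by (rule conv_fun[OF conv _ Ms M c\<psi> \<psi>bd]) (use p in auto)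
    have cvr: "(\<lambda>n. integral\<^sup>L (Ms (r n)) (\<psi> m)) \<longlonglongrightarrow> integral\<^sup>L M (\<psi> m)"
      using LIMSEQ_subseq_LIMSEQ[OF cv r] by (simp add: o_def)
    have er: "(\<lambda>n. eps (r n)) \<longlonglongrightarrow> 0" using LIMSEQ_subseq_LIMSEQ[OF eps r] by (simp add: o_def)
    have "eventually (\<lambda>n. integral\<^sup>L (Ms (r n)) (\<psi> m) \<le> eps (r n)) sequentially"
      using aev[of m]
    proof eventually_elim
      case (elim n)
      have pw: "\<psi> m y \<le> dist (zs n) y powr p - dist x y powr p" for y
      proof -
        have "a m y powr p \<le> dist (zs n) y powr p" using elim a0 p by (intro powr_mono2) auto
        moreover have "- (p * D * rpow (dist x y) (p - 1)) \<le> dist (zs n) y powr p - dist x y powr p"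
        proof -
          have "p * rpow (dist x y) (p - 1) * (dist (zs n) y - dist x y) \<le> dist (zs n) y powr p - dist x y powr p"
            using p by (intro convex_lb) auto
          moreover have "dist x y \<le> dist (zs n) y + D" using D[of n] by metric
          then have "- (p * D * rpow (dist x y) (p - 1)) \<le> p * rpow (dist x y) (p - 1) * (dist (zs n) y - dist x y)"
            using p rpx0[of y] mult_left_mono[of "- D" "dist (zs n) y - dist x y" "p * rpow (dist x y) (p - 1)"]
            by (simp add: algebra_simps)
          ultimately show ?thesis by linarith
        qed
        ultimately show ?thesis unfolding \<psi>_def by auto
      qed
      have N: "Ms (r n) \<in> Prob_r (p - 1)" by (rule Ms)
      have sN: "sets (Ms (r n)) = sets borel" using Prob_rD[OF N] by blast
      have i1: "integrable (Ms (r n)) (\<psi> m)"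
        by (rule Prob_r_integrable_bound[OF N _ meas_cont[OF sN c\<psi>] \<psi>bd]) (use p in auto)
      have i2: "integrable (Ms (r n)) (\<lambda>y. dist (zs n) y powr p - dist x y powr p)"
        using Wp_integrable[OF N p] by auto
      have "integral\<^sup>L (Ms (r n)) (\<psi> m) \<le> Wp (Ms (r n)) p (zs n) x"
        unfolding Wp_def using i1 i2 pw by (intro integral_mono) auto
      also have "\<dots> \<le> eps (r n)" using zs[of n] unfolding Mp_eps_def by auto
      finally show ?case .
    qed
    then show ?thesis using cvr er by (intro LIMSEQ_le) (auto simp: eventually_sequentially)
  qed
  have domc: "(\<lambda>m. integral\<^sup>L M (\<psi> m)) \<longlonglongrightarrow> integral\<^sup>L M hp"
    and ihp: "integrable M hp"
  proof -
    have G: "integrable M (\<lambda>y. Gc + Gb * rpow (dist x y) (p - 1))"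
      using Prob_r_integrable[OF M, of x] p by auto
    have lim: "AE y in M. (\<lambda>m. \<psi> m y) \<longlonglongrightarrow> hp y"
    proof (intro AE_I2)
      fix y
      have c1: "continuous_on UNIV (\<lambda>t::real. max 0 t powr p)"
        using p by (intro cont_powr continuous_intros) auto
      have "(\<lambda>m. max 0 (a m y) powr p) \<longlonglongrightarrow> max 0 (h y) powr p"
        using continuous_on_tendsto_compose[OF c1 alim[of y]] by simp
      then have t1: "(\<lambda>m. a m y powr p) \<longlonglongrightarrow> h y powr p" using a0 h0 by (simp add: max_def)
      have "(\<lambda>m. \<psi> m y) \<longlonglongrightarrow> max (h y powr p - dist x y powr p) (- (p * D * rpow (dist x y) (p - 1)))"
        unfolding \<psi>_def by (intro tendsto_intros t1)
      also have "max (h y powr p - dist x y powr p) (- (p * D * rpow (dist x y) (p - 1))) = hp y"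
        using hp0[of y] pdr[of y] unfolding hp_def by (auto simp: max_def)
      finally show "(\<lambda>m. \<psi> m y) \<longlonglongrightarrow> hp y" .
    qed
    have m1: "hp \<in> borel_measurable M" by (rule meas_cont[OF sM chp])
    have m2: "\<psi> m \<in> borel_measurable M" for m by (rule meas_cont[OF sM c\<psi>])
    have bd: "AE y in M. norm (\<psi> m y) \<le> Gc + Gb * rpow (dist x y) (p - 1)" for m
      using \<psi>bd by (intro AE_I2) auto
    show "(\<lambda>m. integral\<^sup>L M (\<psi> m)) \<longlonglongrightarrow> integral\<^sup>L M hp"
      by (rule integral_dominated_convergence[OF m1 m2 G lim bd])
    show "integrable M hp"
      by (rule integrable_dominated_convergence[OF m1 m2 G lim bd])
  qed
  have "integral\<^sup>L M hp \<le> 0"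
    using domc int\<psi>le by (intro LIMSEQ_le_const2[OF domc]) auto
  moreover have "0 \<le> integral\<^sup>L M hp" using hp0 by (intro integral_nonneg_AE AE_I2) auto
  ultimately have "integral\<^sup>L M hp = 0" by linarith
  then have AE0: "AE y in M. hp y = 0"
    using integral_nonneg_eq_0_iff_AE[OF ihp] hp0 by auto
  obtain y where y: "hp y = 0"
  proof (rule ccontr)
    assume "\<not> thesis"
    then have "\<forall>y. hp y \<noteq> 0" using that by blast
    then have "AE y in M. False" using AE0 by (auto elim: AE_mp)
    then show False by simp
  qed
  have "h y = dist x y"
  proof (rule ccontr)
    assume "h y \<noteq> dist x y"
    then have "dist x y < h y" using hlo[of y] by simp
    then have "dist x y powr p < h y powr p" using p by (intro powr_less_mono2) auto
    then show False using y unfolding hp_def by simp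
  qed
  then show ?thesis using Hh[of y] unfolding H_def by auto
qed



theorem theorem3p8:
  fixes Ms :: "nat \<Rightarrow> 'a::metric_space measure" and M :: "'a measure"
    and p :: real and eps :: "nat \<Rightarrow> real" and xs :: "nat \<Rightarrow> 'a"
  assumes "separable_space (euclidean :: 'a topology)"
    and "admits_weak_convergence TYPE('a)"
    and "p \<ge> 1"
    and "\<And>n. Ms n \<in> Prob_r (p - 1)" and "M \<in> Prob_r (p - 1)"
    and "conv_wr (p - 1) Ms M"
    and "\<And>n. eps n \<ge> 0" and "eps \<longlonglongrightarrow> 0"
    and "\<And>n. xs n \<in> Mp_eps (Ms n) p (eps n)"
  shows "(\<forall>s::nat \<Rightarrow> nat. strict_mono s \<longrightarrow>
            (\<exists>(t::nat \<Rightarrow> nat) z. strict_mono t \<and> (xs \<circ> s \<circ> t) \<longlonglongrightarrow> z)) \<and>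
         (\<forall>(s::nat \<Rightarrow> nat) z. strict_mono s \<and> (xs \<circ> s) \<longlonglongrightarrow> z \<longrightarrow> z \<in> Mp M p)"
proof (intro conjI allI impI)
  note sep = assms(1) and p = assms(3) and Ms = assms(4) and M = assms(5) and conv = assms(6)
    and eps = assms(8) and xs = assms(9)
  show "z \<in> Mp M p" if "strict_mono s \<and> (xs \<circ> s) \<longlonglongrightarrow> z" for s z
    using limit_in_Mp[OF p Ms M conv eps xs] that by blast
  fix s :: "nat \<Rightarrow> nat" assume s: "strict_mono s"
  obtain w :: "(nat \<Rightarrow> 'a) \<Rightarrow> 'a \<Rightarrow> bool" where w: "is_weak_convergence w"
    using assms(2) unfolding admits_weak_convergence_def by blast
  have conv_w: "is_convergence w"
    and W1: "\<And>(us::nat \<Rightarrow> 'a) y. bdd_above (range (\<lambda>n. dist (us n) y)) \<Longrightarrow>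
        \<exists>(s::nat \<Rightarrow> nat) x. strict_mono s \<and> w (us \<circ> s) x"
    and W2: "\<And>us x y. w us x \<Longrightarrow> ereal (dist x y) \<le> liminf (\<lambda>n. ereal (dist (us n) y))"
    and W3: "\<And>us x y. w us x \<Longrightarrow> (\<lambda>n. dist (us n) y) \<longlonglongrightarrow> dist x y \<Longrightarrow> (\<lambda>n. dist (us n) x) \<longlonglongrightarrow> 0"
    using w unfolding is_weak_convergence_def by blast+
  have sub: "\<And>us x t. w us x \<Longrightarrow> strict_mono t \<Longrightarrow> w (us \<circ> t) x"
    using conv_w unfolding is_convergence_def by blast
  obtain cc :: "nat \<Rightarrow> 'a" where cc: "\<And>y e. 0 < e \<Longrightarrow> \<exists>k. dist (cc k) y < e"
    using dense_seq[OF sep] by blast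
  have bdd: "bdd_above (range (\<lambda>n. dist (xs n) (xs 0)))"
    by (rule bounded_minimizers[OF p Ms M conv eps xs])
  then obtain B where B: "\<And>n. dist (xs n) (xs 0) \<le> B" by (auto simp: bdd_above_def)
  have "bdd_above (range (\<lambda>n. dist ((xs \<circ> s) n) (xs 0)))"
    using B by (intro bdd_aboveI2) auto
  from W1[OF this] obtain t1 x where t1: "strict_mono t1" and wx: "w (xs \<circ> s \<circ> t1) x" by blast
  define r where "r = s \<circ> t1"
  have r: "strict_mono r" unfolding r_def using s t1 by (rule strict_mono_o)
  define zs where "zs = xs \<circ> s \<circ> t1"
  have zs_r: "zs n = xs (r n)" for n unfolding zs_def r_def by simp
  have zsM: "zs n \<in> Mp_eps (Ms (r n)) p (eps (r n))" for n unfolding zs_r by (rule xs)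
  have wz: "w zs x" using wx unfolding zs_def .
  have Dz: "dist (zs n) x \<le> B + dist (xs 0) x" for n
    using B[of "r n"] dist_triangle[of "zs n" x "xs 0"] unfolding zs_r by linarith
  obtain y where y: "liminf (\<lambda>n. ereal (dist (zs n) y)) = ereal (dist x y)"
    using key_point[OF p Ms M conv r eps zsM cc W2[OF wz] Dz] by blast
  obtain t2 where t2: "strict_mono t2"
    and lt2: "((\<lambda>n. ereal (dist (zs n) y)) \<circ> t2) \<longlonglongrightarrow> liminf (\<lambda>n. ereal (dist (zs n) y))"
    using liminf_subseq_lim by blast
  have "(\<lambda>n. dist ((zs \<circ> t2) n) y) \<longlonglongrightarrow> dist x y"
    using lt2 unfolding y by (simp add: o_def)
  then have "(\<lambda>n. dist ((zs \<circ> t2) n) x) \<longlonglongrightarrow> 0"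
    using W3[OF sub[OF wz t2]] by blast
  then have "(zs \<circ> t2) \<longlonglongrightarrow> x" using tendsto_dist_iff by blast
  then show "\<exists>t z. strict_mono t \<and> (xs \<circ> s \<circ> t) \<longlonglongrightarrow> z"
    using strict_mono_o[OF t1 t2] unfolding zs_def by (intro exI[of _ "t1 \<circ> t2"] exI[of _ x]) (auto simp: o_assoc)
qed


end
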